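(* Let $(G,P,\Delta)$ be a Garside structure of finite type on a group $G$, and let $S$ be its set of simple elements. Then $$\langle S\setminus\{e\}\mid s\cdot t=st \text{ for all } s,t\in S\setminus\{e\} \text{ such that } st\in S\rangle$$ is a restricted triangular presentation of $G$.
   Context: A Garside structure $(G,P,\Delta)$ on a group $G$ consists of a submonoid $P$ with $P\cap P^{-1}=\{e\}$ and an element $\Delta\in P$ such that: (i) the partial order $a\le_L b\iff a^{-1}b\in P$ is a lattice order on $G$; (ii) the set of simple elements $[e,\Delta]=\{a\in G\mid e\le_L a\le_L\Delta\}$ generates $P$; (iii) $\Delta^{-1}P\Delta=P$; (iv) for every $x\in P\setminus\{e\}$, $\sup\{k\mid x=a_1\cdots a_k,\ a_i\in P\setminus\{e\}\}<\infty$. It is of finite type if $[e,\Delta]$ is finite. A presentation $\langle T\mid R\rangle$ of $G$ ($T\subset G$ a finite generating set) is a restricted triangular presentation if: $T\cap T^{-1}=\emptyset$; $R=\{a\cdot b\cdot c^{-1}\mid a,b,c\in T,\ abc^{-1}=e\text{ in }G\}$ and $\langle T\mid R\rangle$ presents $G$; there are no $a,b,c\in T$ with $abc=e$ in $G$; and for $a,b,c\in T$, $abc\in T$ implies $ab\in T$ and $bc\in T$. *)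

theory Defs
  imports "HOL-Algebra.Group"
begin

definition leL :: "('a, 'b) monoid_scheme \<Rightarrow> 'a set \<Rightarrow> 'a \<Rightarrow> 'a \<Rightarrow> bool" where
  "leL G P a b \<longleftrightarrow> inv\<^bsub>G\<^esub> a \<otimes>\<^bsub>G\<^esub> b \<in> P"

definition lattice_order_on :: "'a set \<Rightarrow> ('a \<Rightarrow> 'a \<Rightarrow> bool) \<Rightarrow> bool" where
  "lattice_order_on A R \<longleftrightarrow>
     (\<forall>a\<in>A. R a a) \<and>
     (\<forall>a\<in>A. \<forall>b\<in>A. R a b \<and> R b a \<longrightarrow> a = b) \<and>
     (\<forall>a\<in>A. \<forall>b\<in>A. \<forall>c\<in>A. R a b \<and> R b c \<longrightarrow> R a c) \<and>
     (\<forall>a\<in>A. \<forall>b\<in>A. \<exists>s\<in>A. R a s \<and> R b s \<and> (\<forall>u\<in>A. R a u \<and> R b u \<longrightarrow> R s u)) \<and>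
     (\<forall>a\<in>A. \<forall>b\<in>A. \<exists>i\<in>A. R i a \<and> R i b \<and> (\<forall>l\<in>A. R l a \<and> R l b \<longrightarrow> R l i))"

definition lprod :: "('a, 'b) monoid_scheme \<Rightarrow> 'a list \<Rightarrow> 'a" where
  "lprod G xs = foldr (\<lambda>x acc. x \<otimes>\<^bsub>G\<^esub> acc) xs \<one>\<^bsub>G\<^esub>"

definition simples :: "('a, 'b) monoid_scheme \<Rightarrow> 'a set \<Rightarrow> 'a \<Rightarrow> 'a set" where
  "simples G P \<Delta> = {a \<in> carrier G. leL G P \<one>\<^bsub>G\<^esub> a \<and> leL G P a \<Delta>}"

definition garside_structure :: "('a, 'b) monoid_scheme \<Rightarrow> 'a set \<Rightarrow> 'a \<Rightarrow> bool" where
  "garside_structure G P \<Delta> \<longleftrightarrow>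
     group G \<and>
     \<comment> \<open>P is a submonoid of G\<close>
     P \<subseteq> carrier G \<and> \<one>\<^bsub>G\<^esub> \<in> P \<and> (\<forall>x\<in>P. \<forall>y\<in>P. x \<otimes>\<^bsub>G\<^esub> y \<in> P) \<and>
     \<comment> \<open>P \<inter> P^{-1} = {e}\<close>
     P \<inter> (\<lambda>x. inv\<^bsub>G\<^esub> x) ` P = {\<one>\<^bsub>G\<^esub>} \<and>
     \<Delta> \<in> P \<and>
     \<comment> \<open>(i) \<R>_L is a lattice order on G\<close>
     lattice_order_on (carrier G) (leL G P) \<and>
     \<comment> \<open>(ii) the simple elements generate P (as a monoid)\<close>
     P = {lprod G xs | xs. set xs \<subseteq> simples G P \<Delta>} \<and>
     \<comment> \<open>(iii) \<Delta>^{-1} P \<Delta> = P\<close>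
     (\<lambda>x. inv\<^bsub>G\<^esub> \<Delta> \<otimes>\<^bsub>G\<^esub> x \<otimes>\<^bsub>G\<^esub> \<Delta>) ` P = P \<and>
     \<comment> \<open>(iv) lengths of factorisations into nontrivial elements are bounded\<close>
     (\<forall>x \<in> P - {\<one>\<^bsub>G\<^esub>}.
        bdd_above {k. \<exists>xs. length xs = k \<and> set xs \<subseteq> P - {\<one>\<^bsub>G\<^esub>} \<and> lprod G xs = x})"

definition garside_finite_type :: "('a, 'b) monoid_scheme \<Rightarrow> 'a set \<Rightarrow> 'a \<Rightarrow> bool" where
  "garside_finite_type G P \<Delta> \<longleftrightarrow> garside_structure G P \<Delta> \<and> finite (simples G P \<Delta>)"

text \<open>Words over generators taken from G: a letter (x, True) stands for x, (x, False) for x^{-1}.\<close>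
type_synonym 'a word = "('a \<times> bool) list"

definition letter_val :: "('a, 'b) monoid_scheme \<Rightarrow> 'a \<times> bool \<Rightarrow> 'a" where
  "letter_val G l = (if snd l then fst l else inv\<^bsub>G\<^esub> (fst l))"

definition word_eval :: "('a, 'b) monoid_scheme \<Rightarrow> 'a word \<Rightarrow> 'a" where
  "word_eval G w = lprod G (map (letter_val G) w)"

inductive pres_step :: "'a set \<Rightarrow> 'a word set \<Rightarrow> 'a word \<Rightarrow> 'a word \<Rightarrow> bool"
  for T :: "'a set" and R :: "'a word set" where
  cancel: "a \<in> T \<Longrightarrow> pres_step T R (u @ [(a, b), (a, \<not> b)] @ v) (u @ v)"
| relator: "r \<in> R \<Longrightarrow> pres_step T R (u @ r @ v) (u @ v)"

text \<open>Equality in the group presented by \<langle>T | R\<rangle>: the equivalence generated by moves.\<close>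
definition pres_equiv :: "'a set \<Rightarrow> 'a word set \<Rightarrow> 'a word \<Rightarrow> 'a word \<Rightarrow> bool" where
  "pres_equiv T R = (symclp (pres_step T R))\<^sup>*\<^sup>*"

text \<open>\<langle>T | R\<rangle> presents G: T generates G, and every word in T^{\<pm>} evaluating to e in G
  is trivial in the presented group (i.e. the kernel of F(T) \<rightarrow> G is the normal closure of R).\<close>
definition presents :: "('a, 'b) monoid_scheme \<Rightarrow> 'a set \<Rightarrow> 'a word set \<Rightarrow> bool" where
  "presents G T R \<longleftrightarrow>
     (\<forall>r\<in>R. set r \<subseteq> T \<times> UNIV \<and> word_eval G r = \<one>\<^bsub>G\<^esub>) \<and>
     (\<forall>g\<in>carrier G. \<exists>w. set w \<subseteq> T \<times> UNIV \<and> word_eval G w = g) \<and>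
     (\<forall>w. set w \<subseteq> T \<times> UNIV \<and> word_eval G w = \<one>\<^bsub>G\<^esub> \<longrightarrow> pres_equiv T R w [])"

definition triangular_relators :: "('a, 'b) monoid_scheme \<Rightarrow> 'a set \<Rightarrow> 'a word set" where
  "triangular_relators G T =
     {[(a, True), (b, True), (c, False)] | a b c.
        a \<in> T \<and> b \<in> T \<and> c \<in> T \<and> a \<otimes>\<^bsub>G\<^esub> b \<otimes>\<^bsub>G\<^esub> inv\<^bsub>G\<^esub> c = \<one>\<^bsub>G\<^esub>}"

definition restricted_triangular_presentation ::
  "('a, 'b) monoid_scheme \<Rightarrow> 'a set \<Rightarrow> 'a word set \<Rightarrow> bool" where
  "restricted_triangular_presentation G T R \<longleftrightarrow>
     T \<subseteq> carrier G \<and> finite T \<and>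
     T \<inter> (\<lambda>x. inv\<^bsub>G\<^esub> x) ` T = {} \<and>
     R = triangular_relators G T \<and>
     presents G T R \<and>
     (\<nexists>a b c. a \<in> T \<and> b \<in> T \<and> c \<in> T \<and> a \<otimes>\<^bsub>G\<^esub> b \<otimes>\<^bsub>G\<^esub> c = \<one>\<^bsub>G\<^esub>) \<and>
     (\<forall>a\<in>T. \<forall>b\<in>T. \<forall>c\<in>T. a \<otimes>\<^bsub>G\<^esub> b \<otimes>\<^bsub>G\<^esub> c \<in> T \<longrightarrow>
        a \<otimes>\<^bsub>G\<^esub> b \<in> T \<and> b \<otimes>\<^bsub>G\<^esub> c \<in> T)"

end

theory Submission
  imports Defs
begin

lemma (in group) cancel_l1 [simp]: "x \<in> carrier G \<Longrightarrow> y \<in> carrier G \<Longrightarrow> x \<otimes> (inv x \<otimes> y) = y"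
  by (simp add: m_assoc[symmetric])
lemma (in group) cancel_l2 [simp]: "x \<in> carrier G \<Longrightarrow> y \<in> carrier G \<Longrightarrow> inv x \<otimes> (x \<otimes> y) = y"
  by (simp add: m_assoc[symmetric])

lemma pe_eq: "pres_equiv T R = equivclp (pres_step T R)"
  by (simp add: pres_equiv_def equivclp_def)

lemma step_ctx: "pres_step T R x y \<Longrightarrow> pres_step T R (a@x@b) (a@y@b)"
proof (induction rule: pres_step.induct)
  case (cancel c u d v)
  show ?case using pres_step.cancel[OF cancel, where u="a@u" and b=d and v="v@b"] by simp
next
  case (relator r u v)
  show ?case using pres_step.relator[OF relator, where u="a@u" and v="v@b"] by simp
qed

lemma eq_ctx: "equivclp (pres_step T R) x y \<Longrightarrow> equivclp (pres_step T R) (a@x@b) (a@y@b)"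
proof (induction rule: equivclp_induct)
  case base thus ?case by simp
next
  case (step y z) thus ?case using step_ctx equivclp_into_equivclp by metis
qed

lemma eq_ctxL: "equivclp (pres_step T R) x y \<Longrightarrow> equivclp (pres_step T R) (a@x) (a@y)"
  using eq_ctx[of T R x y a "[]"] by simp
lemma eq_ctxR: "equivclp (pres_step T R) x y \<Longrightarrow> equivclp (pres_step T R) (x@b) (y@b)"
  using eq_ctx[of T R x y "[]" b] by simp

lemma eq_cancel: "c \<in> T \<Longrightarrow> equivclp (pres_step T R) [(c,d),(c,\<not>d)] []"
  using pres_step.cancel[of c T, where u="[]" and v="[]" and b=d and R=R] by auto
lemma eq_rel: "r \<in> R \<Longrightarrow> equivclp (pres_step T R) r []"
  using pres_step.relator[of r R, where u="[]" and v="[]" and T=T] by auto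

locale gar =
  fixes G (structure) and P :: "'a set" and D :: 'a
  assumes gft: "garside_finite_type G P D"
begin

abbreviation "S \<equiv> simples G P D"
abbreviation "T \<equiv> S - {\<one>}"

lemma gs: "garside_structure G P D" using gft by (simp add: garside_finite_type_def)
lemma finS: "finite S" using gft by (simp add: garside_finite_type_def)

sublocale group G using gs by (simp add: garside_structure_def)

lemma P_sub: "P \<subseteq> carrier G" using gs by (simp add: garside_structure_def)
lemma P_car: "x \<in> P \<Longrightarrow> x \<in> carrier G" using P_sub by blast
lemma one_P: "\<one> \<in> P" using gs by (simp add: garside_structure_def)
lemma mult_P: "x \<in> P \<Longrightarrow> y \<in> P \<Longrightarrow> x \<otimes> y \<in> P" using gs by (simp add: garside_structure_def)
lemma D_P: "D \<in> P" using gs by (simp add: garside_structure_def)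
lemma D_car: "D \<in> carrier G" using D_P P_car by blast
lemma lat: "lattice_order_on (carrier G) (leL G P)" using gs by (simp add: garside_structure_def)
lemma gen: "P = {lprod G xs | xs. set xs \<subseteq> S}" using gs by (simp add: garside_structure_def)
lemma conjP_eq: "(\<lambda>x. inv D \<otimes> x \<otimes> D) ` P = P" using gs by (simp add: garside_structure_def)
lemma bdd: "x \<in> P - {\<one>} \<Longrightarrow> bdd_above {k. \<exists>xs. length xs = k \<and> set xs \<subseteq> P - {\<one>} \<and> lprod G xs = x}"
  using gs by (simp add: garside_structure_def)

lemma PinvP: assumes "x \<in> P" "inv x \<in> P" shows "x = \<one>"
proof -
  have "P \<inter> (\<lambda>x. inv x) ` P = {\<one>}" using gs by (simp add: garside_structure_def)
  hence "inv x = \<one>" using assms by blast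
  thus ?thesis using assms P_car by simp
qed

lemma conjP: "p \<in> P \<Longrightarrow> inv D \<otimes> p \<otimes> D \<in> P" using conjP_eq by blast

lemma S_char: "s \<in> S \<longleftrightarrow> s \<in> P \<and> inv s \<otimes> D \<in> P"
  using P_car by (auto simp: simples_def leL_def)

lemma S_P: "s \<in> S \<Longrightarrow> s \<in> P" using S_char by blast
lemma S_car: "s \<in> S \<Longrightarrow> s \<in> carrier G" using S_P P_car by blast

lemma prod_ne1: assumes "a \<in> P" "b \<in> P" "a \<noteq> \<one>" shows "a \<otimes> b \<noteq> \<one>"
proof
  assume h: "a \<otimes> b = \<one>"
  have "a = inv b" using h assms P_car by (metis inv_equality)
  hence "inv b \<in> P" using assms by simp
  hence "b = \<one>" using PinvP assms by blast
  thus False using h assms P_car by simp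
qed

lemma prod_ne2: assumes "a \<in> P" "b \<in> P" "b \<noteq> \<one>" shows "a \<otimes> b \<noteq> \<one>"
proof
  assume h: "a \<otimes> b = \<one>"
  have "a = inv b" using h assms P_car by (metis inv_equality)
  hence "inv b \<in> P" using assms by simp
  hence "b = \<one>" using PinvP assms by blast
  thus False using assms by simp
qed

lemma right_div: assumes a: "a \<in> P" and b: "b \<in> P" and ab: "a \<otimes> b \<in> S" shows "b \<in> S"
proof -
  have ac: "a \<in> carrier G" and bc: "b \<in> carrier G" using a b P_car by auto
  have d: "inv (a \<otimes> b) \<otimes> D \<in> P" using ab S_char by blast
  have "inv (a \<otimes> b) \<otimes> D \<otimes> (inv D \<otimes> a \<otimes> D) \<in> P" using mult_P[OF d conjP[OF a]] .
  also have "inv (a \<otimes> b) \<otimes> D \<otimes> (inv D \<otimes> a \<otimes> D) = inv b \<otimes> D"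
    using ac bc D_car by (simp add: inv_mult_group m_assoc)
  finally show ?thesis using b S_char by blast
qed

lemma left_div: assumes a: "a \<in> P" and b: "b \<in> P" and ab: "a \<otimes> b \<in> S" shows "a \<in> S"
proof -
  have ac: "a \<in> carrier G" and bc: "b \<in> carrier G" using a b P_car by auto
  have d: "inv (a \<otimes> b) \<otimes> D \<in> P" using ab S_char by blast
  have "b \<otimes> (inv (a \<otimes> b) \<otimes> D) \<in> P" using mult_P[OF b d] .
  also have "b \<otimes> (inv (a \<otimes> b) \<otimes> D) = inv a \<otimes> D"
    using ac bc D_car by (simp add: inv_mult_group m_assoc)
  finally show ?thesis using a S_char by blast
qed

lemma D_S: "D \<in> S"
proof -
  have "inv D \<otimes> D = \<one>" using D_car by simp
  thus ?thesis using D_P one_P S_char by simp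
qed

lemma dS: assumes "s \<in> S" shows "inv s \<otimes> D \<in> S"
proof -
  have sc: "s \<in> carrier G" using assms S_car by blast
  have "s \<otimes> (inv s \<otimes> D) = D" using sc D_car by simp
  hence "s \<otimes> (inv s \<otimes> D) \<in> S" using D_S by simp
  moreover have "inv s \<otimes> D \<in> P" using assms S_char by blast
  ultimately show ?thesis using right_div[of s "inv s \<otimes> D"] assms S_P by blast
qed

lemma tauS: assumes "t \<in> S" shows "inv D \<otimes> t \<otimes> D \<in> S"
proof -
  have tc: "t \<in> carrier G" using assms S_car by blast
  have "(inv t \<otimes> D) \<otimes> (inv D \<otimes> t \<otimes> D) = D" using tc D_car by (simp add: m_assoc)
  hence "(inv t \<otimes> D) \<otimes> (inv D \<otimes> t \<otimes> D) \<in> S" using D_S by simp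
  moreover have "inv t \<otimes> D \<in> P" using assms S_char by blast
  moreover have "inv D \<otimes> t \<otimes> D \<in> P" using conjP assms S_P by blast
  ultimately show ?thesis using right_div by blast
qed


abbreviation "Rr \<equiv> {[(s, True), (t, True), (s \<otimes> t, False)] | s t.
              s \<in> T \<and> t \<in> T \<and> s \<otimes> t \<in> S}"
abbreviation "eqv \<equiv> equivclp (pres_step T Rr)"

lemma T_P: "t \<in> T \<Longrightarrow> t \<in> P" using S_P by blast
lemma T_car: "t \<in> T \<Longrightarrow> t \<in> carrier G" using S_car by blast

lemma prod_T: "s \<in> T \<Longrightarrow> t \<in> P \<Longrightarrow> s \<otimes> t \<in> S \<Longrightarrow> s \<otimes> t \<in> T"
  using prod_ne1 T_P by blast

lemma canc_pn: "c \<in> T \<Longrightarrow> eqv [(c,True),(c,False)] []" using eq_cancel[of c T, where d=True and R=Rr] by simp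
lemma canc_np: "c \<in> T \<Longrightarrow> eqv [(c,False),(c,True)] []" using eq_cancel[of c T, where d=False and R=Rr] by simp

lemma rel2: assumes s: "s \<in> T" and t: "t \<in> T" and st: "s \<otimes> t \<in> S"
  shows "eqv [(s,True),(t,True)] [(s \<otimes> t,True)]"
proof -
  have stT: "s \<otimes> t \<in> T" using prod_T s t st T_P by blast
  have "eqv [(s,True),(t,True)] ([(s,True),(t,True)] @ [(s \<otimes> t,False),(s \<otimes> t,True)])"
    using eq_ctxL[OF canc_np[OF stT], of "[(s,True),(t,True)]"] by (simp add: equivclp_sym)
  also have "... = [(s,True),(t,True),(s \<otimes> t,False)] @ [(s \<otimes> t,True)]" by simp
  also have "eqv ... ([] @ [(s \<otimes> t,True)])"
    by (rule eq_ctxR, rule eq_rel) (use s t st in blast)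
  finally show ?thesis by simp
qed


abbreviation "wc w \<equiv> set w \<subseteq> carrier G \<times> UNIV"
abbreviation "ev w \<equiv> word_eval G w"

lemma lprod_Nil[simp]: "lprod G [] = \<one>" by (simp add: lprod_def)
lemma lprod_Cons[simp]: "lprod G (x#xs) = x \<otimes> lprod G xs" by (simp add: lprod_def)
lemma lprod_car: "set xs \<subseteq> carrier G \<Longrightarrow> lprod G xs \<in> carrier G"
  by (induction xs) auto
lemma lprod_P: "set xs \<subseteq> P \<Longrightarrow> lprod G xs \<in> P"
  by (induction xs) (auto intro: mult_P one_P)
lemma lprod_app: "set xs \<subseteq> carrier G \<Longrightarrow> set ys \<subseteq> carrier G \<Longrightarrow> lprod G (xs@ys) = lprod G xs \<otimes> lprod G ys"
  by (induction xs) (auto simp: m_assoc lprod_car)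

lemma lv_car: "fst l \<in> carrier G \<Longrightarrow> letter_val G l \<in> carrier G"
  by (auto simp: letter_val_def)
lemma ev_Nil[simp]: "ev [] = \<one>" by (simp add: word_eval_def)
lemma ev_Cons[simp]: "ev (l#w) = letter_val G l \<otimes> ev w" by (simp add: word_eval_def)
lemma ev_car: "wc w \<Longrightarrow> ev w \<in> carrier G"
  by (induction w) (auto intro!: lv_car)
lemma ev_app: "wc u \<Longrightarrow> wc v \<Longrightarrow> ev (u@v) = ev u \<otimes> ev v"
  by (induction u) (auto simp: m_assoc ev_car lv_car)

lemma step_eval: "pres_step T Rr x y \<Longrightarrow> (wc x \<longleftrightarrow> wc y) \<and> (wc x \<longrightarrow> ev x = ev y)"
proof (induction rule: pres_step.induct)
  case (cancel a u b v)
  have ac: "a \<in> carrier G" using cancel T_car by blast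
  have pr: "ev [(a,b),(a,\<not>b)] = \<one>" using ac by (cases b) (auto simp: letter_val_def)
  have wcp: "wc [(a,b),(a,\<not>b)]" using ac by auto
  show ?case
  proof (intro conjI impI)
    show "wc (u @ [(a, b), (a, \<not> b)] @ v) = wc (u @ v)" using ac by auto
  next
    assume w: "wc (u @ [(a, b), (a, \<not> b)] @ v)"
    hence "wc u" "wc v" by auto
    thus "ev (u @ [(a, b), (a, \<not> b)] @ v) = ev (u @ v)"
      using ev_app[of u "[(a,b),(a,\<not>b)] @ v"] ev_app[of "[(a,b),(a,\<not>b)]" v] ev_app[of u v] wcp pr
      by (simp add: ev_car)
  qed
next
  case (relator r u v)
  then obtain s t where r: "r = [(s, True), (t, True), (s \<otimes> t, False)]" and st: "s \<in> T" "t \<in> T"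
    by blast
  have sc: "s \<in> carrier G" "t \<in> carrier G" using st T_car by auto
  have wcr: "wc r" using r sc by auto
  have pr: "ev r = \<one>" using r sc by (simp add: letter_val_def inv_mult_group m_assoc)
  show ?case
  proof (intro conjI impI)
    show "wc (u @ r @ v) = wc (u @ v)" using wcr by auto
  next
    assume w: "wc (u @ r @ v)"
    hence "wc u" "wc v" by auto
    thus "ev (u @ r @ v) = ev (u @ v)"
      using ev_app[of u "r @ v"] ev_app[of r v] ev_app[of u v] wcr pr
      by (simp add: ev_car)
  qed
qed

lemma eqv_eval: "eqv x y \<Longrightarrow> wc x \<Longrightarrow> wc y \<and> ev x = ev y"
proof (induction rule: equivclp_induct)
  case base thus ?case by simp
next
  case (step y z)
  have wy: "wc y" and ey: "ev x = ev y" using step by auto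
  from step.hyps(2) have "wc z \<and> ev y = ev z"
  proof
    assume h: "pres_step T Rr y z"
    show ?thesis using step_eval[OF h] wy by simp
  next
    assume h: "pres_step T Rr z y"
    show ?thesis using step_eval[OF h] wy by simp
  qed
  thus ?case using ey by simp
qed

abbreviation "pos w \<equiv> set w \<subseteq> T \<times> {True}"
definition "Lset x = {k. \<exists>xs. length xs = k \<and> set xs \<subseteq> P - {\<one>} \<and> lprod G xs = x}"

lemma pos_wc: "pos w \<Longrightarrow> wc w" using T_car by auto

lemma pos_ev: "pos w \<Longrightarrow> ev w = lprod G (map fst w)"
  by (induction w) (auto simp: letter_val_def)

lemma pos_fst: "pos w \<Longrightarrow> set (map fst w) \<subseteq> P - {\<one>}"
  using S_P by fastforce

lemma pos_L: "pos w \<Longrightarrow> length w \<in> Lset (ev w)"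
  unfolding Lset_def using pos_ev[of w] pos_fst[of w] by (intro CollectI exI[of _ "map fst w"]) simp

lemma pos_P: "pos w \<Longrightarrow> ev w \<in> P"
  using pos_ev[of w] pos_fst[of w] lprod_P[of "map fst w"] by auto

lemma L_one: "k \<in> Lset \<one> \<Longrightarrow> k = 0"
proof -
  assume "k \<in> Lset \<one>"
  then obtain xs where xs: "length xs = k" "set xs \<subseteq> P - {\<one>}" "lprod G xs = \<one>"
    unfolding Lset_def by blast
  show "k = 0"
  proof (cases xs)
    case Nil thus ?thesis using xs by simp
  next
    case (Cons a ys)
    have "lprod G ys \<in> P" using xs Cons by (auto intro!: lprod_P)
    hence "a \<otimes> lprod G ys \<noteq> \<one>" using prod_ne1 xs Cons by auto
    thus ?thesis using xs Cons by simp
  qed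
qed

lemma L_cons: "k \<in> Lset z \<Longrightarrow> s \<in> P - {\<one>} \<Longrightarrow> Suc k \<in> Lset (s \<otimes> z)"
proof -
  assume k: "k \<in> Lset z" and s: "s \<in> P - {\<one>}"
  then obtain xs where xs: "length xs = k" "set xs \<subseteq> P - {\<one>}" "lprod G xs = z"
    unfolding Lset_def by blast
  show ?thesis unfolding Lset_def using xs s by (intro CollectI exI[of _ "s#xs"]) auto
qed

lemma exists_pos: assumes "p \<in> P" shows "\<exists>w. pos w \<and> ev w = p"
proof -
  obtain xs where xs: "set xs \<subseteq> S" "p = lprod G xs" using assms gen by blast
  have "pos (map (\<lambda>a. (a,True)) (filter (\<lambda>a. a \<noteq> \<one>) xs)) \<and>
        ev (map (\<lambda>a. (a,True)) (filter (\<lambda>a. a \<noteq> \<one>) xs)) = lprod G xs"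
    using xs(1)
  proof (induction xs)
    case Nil thus ?case by simp
  next
    case (Cons b xs)
    have "lprod G xs \<in> carrier G" using Cons.prems S_car by (intro lprod_car) auto
    thus ?case using Cons by (auto simp: letter_val_def)
  qed
  thus ?thesis using xs by blast
qed

definition "wd a = (if a = \<one> then [] else [(a,True)])"

lemma wd_pos: "a \<in> S \<Longrightarrow> pos (wd a)" by (auto simp: wd_def)
lemma wd_ev: "a \<in> carrier G \<Longrightarrow> ev (wd a) = a" by (auto simp: wd_def letter_val_def)

lemma merge: assumes s: "s \<in> T" and a: "a \<in> S" and sa: "s \<otimes> a \<in> S"
  shows "eqv ([(s,True)] @ wd a) (wd (s \<otimes> a))"
proof (cases "a = \<one>")
  case True
  thus ?thesis using s T_car by (simp add: wd_def)
next
  case False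
  have "s \<otimes> a \<noteq> \<one>" using prod_ne1 s a T_P S_P by blast
  thus ?thesis using False rel2[of s a] s a sa by (simp add: wd_def)
qed


lemma sup_ex: assumes "a \<in> carrier G" "b \<in> carrier G"
  shows "\<exists>r\<in>carrier G. inv a \<otimes> r \<in> P \<and> inv b \<otimes> r \<in> P \<and>
           (\<forall>w\<in>carrier G. inv a \<otimes> w \<in> P \<and> inv b \<otimes> w \<in> P \<longrightarrow> inv r \<otimes> w \<in> P)"
proof -
  have h: "\<forall>a\<in>carrier G. \<forall>b\<in>carrier G. \<exists>s\<in>carrier G. leL G P a s \<and> leL G P b s \<and>
     (\<forall>u\<in>carrier G. leL G P a u \<and> leL G P b u \<longrightarrow> leL G P s u)"
    using lat unfolding lattice_order_on_def by (elim conjE)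
  show ?thesis using h[rule_format, OF assms] unfolding leL_def .
qed

lemma key_step:
  assumes IH: "\<forall>x u v. (\<forall>k\<in>Lset x. k \<le> m) \<longrightarrow> pos u \<longrightarrow> pos v \<longrightarrow> ev u = x \<longrightarrow> ev v = x \<longrightarrow> eqv u v"
    and bound: "\<forall>k\<in>Lset x. k \<le> Suc m" and pu: "pos ((s,True)#u')" and eu: "ev ((s,True)#u') = x"
    and r: "r \<in> S" and sr: "inv s \<otimes> r \<in> P" and py: "pos yw" and ey: "ev yw = inv r \<otimes> x"
  shows "eqv ((s,True)#u') (wd r @ yw)"
proof -
  have sT: "s \<in> T" and pu': "pos u'" using pu by auto
  have sc: "s \<in> carrier G" using sT T_car by blast
  have rc: "r \<in> carrier G" using r S_car by blast
  define z where "z = ev u'"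
  have zc: "z \<in> carrier G" unfolding z_def using pu' pos_wc ev_car by blast
  have zP: "z \<in> P" unfolding z_def using pu' pos_P by blast
  have x: "x = s \<otimes> z" using eu z_def by (simp add: letter_val_def)
  define s' where "s' = inv s \<otimes> r"
  have s'c: "s' \<in> carrier G" unfolding s'_def using sc rc by simp
  have ss': "s \<otimes> s' = r" unfolding s'_def using sc rc by simp
  have s'P: "s' \<in> P" unfolding s'_def using sr .
  have "s \<otimes> s' \<in> S" using ss' r by simp
  hence s'S: "s' \<in> S" using right_div[OF T_P[OF sT] s'P] by blast
  define w2 where "w2 = wd s' @ yw"
  have pw2: "pos w2" unfolding w2_def using wd_pos[OF s'S] py by auto
  have "ev w2 = s' \<otimes> (inv r \<otimes> x)"
    unfolding w2_def using ev_app[of "wd s'" yw] wd_pos[OF s'S] py pos_wc wd_ev[OF s'c] ey by simp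
  also have "... = z" unfolding s'_def x using sc rc zc by (simp add: m_assoc)
  finally have ew2: "ev w2 = z" .
  have bz: "\<forall>k\<in>Lset z. k \<le> m"
  proof
    fix k assume "k \<in> Lset z"
    hence "Suc k \<in> Lset x" using L_cons[of k z s] sT T_P x by blast
    thus "k \<le> m" using bound by fastforce
  qed
  have "eqv u' w2" by (rule IH[rule_format, of z u' w2]) (use bz pu' pw2 z_def ew2 in auto)
  hence "eqv ([(s,True)] @ u') ([(s,True)] @ w2)" by (rule eq_ctxL)
  also have "[(s,True)] @ w2 = ([(s,True)] @ wd s') @ yw" unfolding w2_def by simp
  also have "eqv ... (wd (s \<otimes> s') @ yw)" by (rule eq_ctxR, rule merge) (use sT s'S ss' r in auto)
  finally show ?thesis using ss' by simp
qed

lemma key: "\<forall>x u v. (\<forall>k\<in>Lset x. k \<le> n) \<longrightarrow> pos u \<longrightarrow> pos v \<longrightarrow> ev u = x \<longrightarrow> ev v = x \<longrightarrow> eqv u v"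
proof (induction n)
  case 0
  show ?case
  proof (intro allI impI)
    fix x u v assume b: "\<forall>k\<in>Lset x. k \<le> 0" and pu: "pos u" and pv: "pos v" and eu: "ev u = x" and ev: "ev v = x"
    have "length u = 0" using b pos_L[OF pu] eu by fastforce
    moreover have "length v = 0" using b pos_L[OF pv] ev by fastforce
    ultimately show "eqv u v" by simp
  qed
next
  case (Suc m)
  show ?case
  proof (intro allI impI)
    fix x u v assume b: "\<forall>k\<in>Lset x. k \<le> Suc m" and pu: "pos u" and pv: "pos v" and eu: "ev u = x" and ev: "ev v = x"
    show "eqv u v"
    proof (cases "u = [] \<or> v = []")
      case True
      hence "x = \<one>" using eu ev by auto
      hence "length u = 0" "length v = 0" using L_one pos_L[OF pu] pos_L[OF pv] eu ev by auto
      thus ?thesis by simp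
    next
      case False
      then obtain s bu u' t bv v' where u: "u = (s,bu)#u'" and v: "v = (t,bv)#v'"
      proof -
        obtain l1 u' where "u = l1#u'" using False by (cases u) auto
        moreover obtain l2 v' where "v = l2#v'" using False by (cases v) auto
        ultimately show ?thesis using that by (cases l1, cases l2) auto
      qed
      have bu: "bu = True" and bv: "bv = True" and sT: "s \<in> T" and tT: "t \<in> T"
        and pu': "pos u'" and pv': "pos v'" using pu pv u v by auto
      have sc: "s \<in> carrier G" and tc: "t \<in> carrier G" using sT tT T_car by auto
      have xc: "x \<in> carrier G" using eu pu pos_wc ev_car by blast
      have xu: "x = s \<otimes> ev u'" using eu u bu by (simp add: letter_val_def)
      have xv: "x = t \<otimes> ev v'" using ev v bv by (simp add: letter_val_def)
      have u'c: "ev u' \<in> carrier G" using pu' pos_wc ev_car by blast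
      have v'c: "ev v' \<in> carrier G" using pv' pos_wc ev_car by blast
      have sx: "inv s \<otimes> x \<in> P" using xu sc u'c pos_P[OF pu'] by simp
      have tx: "inv t \<otimes> x \<in> P" using xv tc v'c pos_P[OF pv'] by simp
      obtain r where rc: "r \<in> carrier G" and sr: "inv s \<otimes> r \<in> P" and tr: "inv t \<otimes> r \<in> P"
        and rmin: "\<forall>w\<in>carrier G. inv s \<otimes> w \<in> P \<and> inv t \<otimes> w \<in> P \<longrightarrow> inv r \<otimes> w \<in> P"
        using sup_ex[OF sc tc] by blast
      have rx: "inv r \<otimes> x \<in> P" using rmin sx tx xc by blast
      have rD: "inv r \<otimes> D \<in> P" using rmin sT tT S_char D_car by blast
      have "s \<otimes> (inv s \<otimes> r) \<in> P" using mult_P sT T_P sr by blast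
      hence rP: "r \<in> P" using sc rc by simp
      have rS: "r \<in> S" using rP rD S_char by blast
      obtain yw where py: "pos yw" and ey: "ev yw = inv r \<otimes> x" using exists_pos[OF rx] by blast
      have IH: "\<forall>x u v. (\<forall>k\<in>Lset x. k \<le> m) \<longrightarrow> pos u \<longrightarrow> pos v \<longrightarrow> ev u = x \<longrightarrow> ev v = x \<longrightarrow> eqv u v"
        using Suc.IH .
      have 1: "eqv u (wd r @ yw)" using key_step[OF IH b, of s u' r yw] pu eu u bu rS sr py ey by simp
      have 2: "eqv v (wd r @ yw)" using key_step[OF IH b, of t v' r yw] pv ev v bv rS tr py ey by simp
      show ?thesis using equivclp_trans[OF 1 equivclp_sym[OF 2]] .
    qed
  qed
qed


definition "dd s = inv s \<otimes> D"
definition "tau t = inv D \<otimes> t \<otimes> D"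
definition "tauw p = map (\<lambda>(a,b). (tau a, b)) p"

lemma D_ne: "T \<noteq> {} \<Longrightarrow> D \<in> T"
proof (rule ccontr)
  assume ne: "T \<noteq> {}" and n: "D \<notin> T"
  hence D1: "D = \<one>" using D_S by blast
  obtain s where s: "s \<in> T" using ne by blast
  have "inv s \<otimes> D \<in> P" using s S_char by blast
  hence "inv s \<in> P" using D1 s T_car by simp
  hence "s = \<one>" using PinvP s T_P by blast
  thus False using s by blast
qed

lemma tau_T: assumes t: "t \<in> T" shows "tau t \<in> T"
proof -
  have tc: "t \<in> carrier G" using t T_car by blast
  have "tau t \<in> S" unfolding tau_def using tauS t by blast
  moreover have "tau t \<noteq> \<one>"
  proof
    assume "tau t = \<one>"
    hence "D \<otimes> tau t \<otimes> inv D = \<one>" using D_car by simp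
    moreover have "D \<otimes> tau t \<otimes> inv D = t" unfolding tau_def using tc D_car by (simp add: m_assoc)
    ultimately show False using t by simp
  qed
  ultimately show ?thesis by blast
qed

lemma dd_S: "s \<in> S \<Longrightarrow> dd s \<in> S" unfolding dd_def using dS .

lemma swap1: assumes DT: "D \<in> T" and t: "t \<in> T"
  shows "eqv [(D,False),(t,True)] [(tau t,True),(D,False)]"
proof (cases "t = D")
  case True
  have "tau t = D" unfolding tau_def True using D_car by (simp add: m_assoc)
  thus ?thesis using True equivclp_trans[OF canc_np[OF DT] equivclp_sym[OF canc_pn[OF DT]]] by simp
next
  case False
  have tc: "t \<in> carrier G" using t T_car by blast
  have dT: "dd t \<in> T"
  proof -
    have "dd t \<in> S" using dd_S t by blast
    moreover have "dd t \<noteq> \<one>"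
    proof
      assume "dd t = \<one>"
      hence "t \<otimes> dd t = t" using tc by simp
      moreover have "t \<otimes> dd t = D" unfolding dd_def using tc D_car by simp
      ultimately show False using False by simp
    qed
    ultimately show ?thesis by blast
  qed
  have tT: "tau t \<in> T" using tau_T t .
  have e1: "t \<otimes> dd t = D" unfolding dd_def using tc D_car by simp
  have e2: "dd t \<otimes> tau t = D" unfolding dd_def tau_def using tc D_car by (simp add: m_assoc)
  have r1: "eqv [(t,True),(dd t,True)] [(D,True)]" using rel2[OF t dT] e1 D_S by simp
  have r2: "eqv [(dd t,True),(tau t,True)] [(D,True)]" using rel2[OF dT tT] e2 D_S by simp
  have "eqv [(D,False),(t,True)] ([(D,False),(t,True)] @ [(dd t,True),(dd t,False)])"
    using eq_ctxL[OF canc_pn[OF dT], of "[(D,False),(t,True)]"] by (simp add: equivclp_sym)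
  also have "... = [(D,False)] @ [(t,True),(dd t,True)] @ [(dd t,False)]" by simp
  also have "eqv ... ([(D,False)] @ [(D,True)] @ [(dd t,False)])" by (rule eq_ctx[OF r1])
  also have "... = [(D,False),(D,True)] @ [(dd t,False)]" by simp
  also have "eqv ... ([] @ [(dd t,False)])" by (rule eq_ctxR[OF canc_np[OF DT]])
  finally have A: "eqv [(D,False),(t,True)] [(dd t,False)]" by simp
  have "eqv [(tau t,True),(D,False)] ([(dd t,False),(dd t,True)] @ [(tau t,True),(D,False)])"
    using eq_ctxR[OF canc_np[OF dT], of "[(tau t,True),(D,False)]"] by (simp add: equivclp_sym)
  also have "... = [(dd t,False)] @ [(dd t,True),(tau t,True)] @ [(D,False)]" by simp
  also have "eqv ... ([(dd t,False)] @ [(D,True)] @ [(D,False)])" by (rule eq_ctx[OF r2])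
  also have "... = [(dd t,False)] @ [(D,True),(D,False)]" by simp
  also have "eqv ... ([(dd t,False)] @ [])" by (rule eq_ctxL[OF canc_pn[OF DT]])
  finally have B: "eqv [(tau t,True),(D,False)] [(dd t,False)]" by simp
  show ?thesis using equivclp_trans[OF A equivclp_sym[OF B]] .
qed

lemma neg1: assumes DT: "D \<in> T" and s: "s \<in> T"
  shows "eqv [(s,False)] (wd (dd s) @ [(D,False)])"
proof (cases "s = D")
  case True
  have "dd s = \<one>" unfolding dd_def True using D_car by simp
  thus ?thesis using True by (simp add: wd_def)
next
  case False
  have sc: "s \<in> carrier G" using s T_car by blast
  have dT: "dd s \<in> T"
  proof -
    have "dd s \<in> S" using dd_S s by blast
    moreover have "dd s \<noteq> \<one>"
    proof
      assume "dd s = \<one>"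
      hence "s \<otimes> dd s = s" using sc by simp
      moreover have "s \<otimes> dd s = D" unfolding dd_def using sc D_car by simp
      ultimately show False using False by simp
    qed
    ultimately show ?thesis by blast
  qed
  have e1: "s \<otimes> dd s = D" unfolding dd_def using sc D_car by simp
  have r1: "eqv [(s,True),(dd s,True)] [(D,True)]" using rel2[OF s dT] e1 D_S by simp
  have wdd: "wd (dd s) @ [(D,False)] = [(dd s,True),(D,False)]" using dT by (simp add: wd_def)
  have "eqv [(dd s,True),(D,False)] ([(s,False),(s,True)] @ [(dd s,True),(D,False)])"
    using eq_ctxR[OF canc_np[OF s], of "[(dd s,True),(D,False)]"] by (simp add: equivclp_sym)
  also have "... = [(s,False)] @ [(s,True),(dd s,True)] @ [(D,False)]" by simp
  also have "eqv ... ([(s,False)] @ [(D,True)] @ [(D,False)])" by (rule eq_ctx[OF r1])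
  also have "... = [(s,False)] @ [(D,True),(D,False)]" by simp
  also have "eqv ... ([(s,False)] @ [])" by (rule eq_ctxL[OF canc_pn[OF DT]])
  finally show ?thesis using wdd by (simp add: equivclp_sym)
qed

lemma swapw: assumes DT: "D \<in> T"
  shows "pos p \<Longrightarrow> pos (tauw p) \<and> eqv ([(D,False)] @ p) (tauw p @ [(D,False)])"
proof (induction p)
  case Nil thus ?case by (simp add: tauw_def)
next
  case (Cons l p)
  obtain t b where l: "l = (t,b)" by (cases l)
  have b: "b = True" and t: "t \<in> T" and pp: "pos p" using Cons.prems l by auto
  have IH: "pos (tauw p)" "eqv ([(D,False)] @ p) (tauw p @ [(D,False)])" using Cons.IH pp by auto
  have tw: "tauw (l#p) = (tau t, True) # tauw p" using l b by (simp add: tauw_def)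
  have "[(D,False)] @ (l#p) = [(D,False),(t,True)] @ p" using l b by simp
  also have "eqv ... ([(tau t,True),(D,False)] @ p)" by (rule eq_ctxR[OF swap1[OF DT t]])
  also have "... = [(tau t,True)] @ ([(D,False)] @ p)" by simp
  also have "eqv ... ([(tau t,True)] @ (tauw p @ [(D,False)]))" by (rule eq_ctxL[OF IH(2)])
  also have "... = tauw (l#p) @ [(D,False)]" using tw by simp
  finally show ?case using tw IH(1) tau_T[OF t] by simp
qed

lemma normal: assumes DT: "D \<in> T"
  shows "set w \<subseteq> T \<times> UNIV \<Longrightarrow> \<exists>p k. pos p \<and> eqv w (p @ replicate k (D,False))"
proof (induction w)
  case Nil
  show ?case by (rule exI[of _ "[]"], rule exI[of _ 0]) simp
next
  case (Cons l w)
  obtain s b where l: "l = (s,b)" by (cases l)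
  have s: "s \<in> T" and ww: "set w \<subseteq> T \<times> UNIV" using Cons.prems l by auto
  obtain p k where pp: "pos p" and pe: "eqv w (p @ replicate k (D,False))" using Cons.IH ww by blast
  show ?case
  proof (cases b)
    case True
    have "eqv ([(s,True)] @ w) ([(s,True)] @ (p @ replicate k (D,False)))" by (rule eq_ctxL[OF pe])
    thus ?thesis using l True pp s
      by (intro exI[of _ "(s,True)#p"] exI[of _ k]) simp
  next
    case False
    have sS: "s \<in> S" using s by blast
    have tw: "pos (tauw p)" and sw: "eqv ([(D,False)] @ p) (tauw p @ [(D,False)])"
      using swapw[OF DT pp] by auto
    have "l # w = [(s,False)] @ w" using l False by simp
    also have "eqv ... ([(s,False)] @ (p @ replicate k (D,False)))" by (rule eq_ctxL[OF pe])
    also have "eqv ... ((wd (dd s) @ [(D,False)]) @ (p @ replicate k (D,False)))"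
      by (rule eq_ctxR[OF neg1[OF DT s]])
    also have "... = wd (dd s) @ ([(D,False)] @ p) @ replicate k (D,False)" by simp
    also have "eqv ... (wd (dd s) @ (tauw p @ [(D,False)]) @ replicate k (D,False))"
      by (rule eq_ctx[OF sw])
    also have "... = (wd (dd s) @ tauw p) @ replicate (Suc k) (D,False)" by simp
    finally show ?thesis using wd_pos[OF dd_S[OF sS]] tw
      by (intro exI[of _ "wd (dd s) @ tauw p"] exI[of _ "Suc k"]) auto
  qed
qed

lemma Dk: assumes DT: "D \<in> T" shows "eqv (replicate k (D,True) @ replicate k (D,False)) []"
proof (induction k)
  case 0 thus ?case by simp
next
  case (Suc k)
  have "replicate (Suc k) (D,True) @ replicate (Suc k) (D,False)
        = [(D,True)] @ (replicate k (D,True) @ replicate k (D,False)) @ [(D,False)]"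
    by (simp add: replicate_append_same[symmetric])
  also have "eqv ... ([(D,True)] @ [] @ [(D,False)])" by (rule eq_ctx[OF Suc.IH])
  also have "eqv ... []" using canc_pn[OF DT] by simp
  finally show ?case .
qed

lemma bound_ex: assumes "x \<in> P" shows "\<exists>n. \<forall>k\<in>Lset x. k \<le> n"
proof (cases "x = \<one>")
  case True thus ?thesis using L_one by blast
next
  case False
  hence "bdd_above (Lset x)" using bdd[of x] assms unfolding Lset_def by simp
  thus ?thesis unfolding bdd_above_def by blast
qed

lemma kernel: assumes w: "set w \<subseteq> T \<times> UNIV" and e: "ev w = \<one>" shows "eqv w []"
proof (cases "T = {}")
  case True
  hence "w = []" using w by (cases w) auto
  thus ?thesis by simp
next
  case False
  hence DT: "D \<in> T" using D_ne by blast
  obtain p k where pp: "pos p" and pe: "eqv w (p @ replicate k (D,False))" using normal[OF DT w] by blast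
  define a where "a = replicate k (D,True)"
  define b where "b = replicate k (D,False)"
  have wcw: "wc w" using w T_car by auto
  have wca: "wc a" and wcb: "wc b" unfolding a_def b_def using D_car by auto
  have pa: "pos a" unfolding a_def using DT by auto
  have "wc (p @ b) \<and> ev w = ev (p @ b)" using eqv_eval[OF pe[folded b_def] wcw] .
  hence "ev p \<otimes> ev b = \<one>" using e ev_app[of p b] pos_wc[OF pp] wcb by simp
  hence 1: "inv (ev b) = ev p" using inv_equality ev_car wcb pos_wc[OF pp] by blast
  have "eqv (a @ b) []" unfolding a_def b_def using Dk[OF DT] .
  hence "ev (a @ b) = \<one>" using eqv_eval wca wcb by fastforce
  hence "ev a \<otimes> ev b = \<one>" using ev_app wca wcb by simp
  hence 2: "inv (ev b) = ev a" using inv_equality ev_car wcb wca by blast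
  obtain n where n: "\<forall>k\<in>Lset (ev p). k \<le> n" using bound_ex pos_P[OF pp] by blast
  have "eqv p a" by (rule key[of n, rule_format, of "ev p" p a]) (use n pp pa 1 2 in auto)
  hence "eqv (p @ b) (a @ b)" by (rule eq_ctxR)
  hence "eqv w (a @ b)" using equivclp_trans[OF pe[folded b_def]] by blast
  thus ?thesis using equivclp_trans[OF _ \<open>eqv (a @ b) []\<close>] by blast
qed

definition "winv w = rev (map (\<lambda>(a,b). (a, \<not> b)) w)"

lemma winv_ev: "wc w \<Longrightarrow> wc (winv w) \<and> ev (winv w) = inv (ev w)"
proof (induction w)
  case Nil thus ?case by (simp add: winv_def)
next
  case (Cons l w)
  obtain a b where l: "l = (a,b)" by (cases l)
  have ac: "a \<in> carrier G" and ww: "wc w" using Cons.prems l by auto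
  have IH: "wc (winv w)" "ev (winv w) = inv (ev w)" using Cons.IH ww by auto
  have wi: "winv (l#w) = winv w @ [(a, \<not> b)]" using l by (simp add: winv_def)
  have "ev (winv (l#w)) = inv (ev w) \<otimes> letter_val G (a, \<not> b)"
    using wi ev_app[of "winv w" "[(a, \<not> b)]"] IH ac lv_car ev_car ww by simp
  also have "... = inv (letter_val G (a,b) \<otimes> ev w)"
    using ac ev_car[OF ww] by (cases b) (simp_all add: letter_val_def inv_mult_group)
  finally show ?case using wi IH ac l by simp
qed

lemma generate: assumes g: "g \<in> carrier G" shows "\<exists>w. set w \<subseteq> T \<times> UNIV \<and> ev w = g"
proof -
  obtain r where rc: "r \<in> carrier G" and r1: "inv \<one> \<otimes> r \<in> P" and gr: "inv g \<otimes> r \<in> P"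
    using sup_ex[OF one_closed g] by blast
  have rP: "r \<in> P" using r1 rc by simp
  obtain wr where pr: "pos wr" and er: "ev wr = r" using exists_pos[OF rP] by blast
  obtain wq where pq: "pos wq" and eq: "ev wq = inv g \<otimes> r" using exists_pos[OF gr] by blast
  have wq: "wc (winv wq)" "ev (winv wq) = inv (inv g \<otimes> r)" using winv_ev[OF pos_wc[OF pq]] eq by auto
  have "ev (wr @ winv wq) = r \<otimes> inv (inv g \<otimes> r)" using ev_app pos_wc[OF pr] wq er by simp
  also have "... = g" using rc g by (simp add: inv_mult_group m_assoc)
  finally have "ev (wr @ winv wq) = g" .
  moreover have "set (wr @ winv wq) \<subseteq> T \<times> UNIV" using pr pq by (auto simp: winv_def)
  ultimately show ?thesis by blast
qed


lemma main_gar: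
  "restricted_triangular_presentation G T Rr"
  unfolding restricted_triangular_presentation_def
proof (intro conjI)
  show "T \<subseteq> carrier G" using T_car by blast
  show "finite T" using finS by blast
  show "T \<inter> (\<lambda>x. inv x) ` T = {}"
  proof (rule ccontr)
    assume "T \<inter> (\<lambda>x. inv x) ` T \<noteq> {}"
    then obtain t t' where t: "t \<in> T" and t': "t' \<in> T" and e: "t = inv t'" by blast
    have "inv t = t'" using e t' T_car by simp
    hence "inv t \<in> P" using t' T_P by blast
    hence "t = \<one>" using PinvP t T_P by blast
    thus False using t by blast
  qed
  show "Rr = triangular_relators G T"
  proof
    show "Rr \<subseteq> triangular_relators G T"
    proof
      fix r assume "r \<in> Rr"
      then obtain s t where r: "r = [(s, True), (t, True), (s \<otimes> t, False)]" and st: "s \<in> T" "t \<in> T" "s \<otimes> t \<in> S"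
        by blast
      have stT: "s \<otimes> t \<in> T" using prod_T st T_P by blast
      have "s \<otimes> t \<otimes> inv (s \<otimes> t) = \<one>" using st T_car by simp
      thus "r \<in> triangular_relators G T" unfolding triangular_relators_def using r st stT by blast
    qed
  next
    show "triangular_relators G T \<subseteq> Rr"
    proof
      fix r assume "r \<in> triangular_relators G T"
      then obtain a b c where r: "r = [(a, True), (b, True), (c, False)]" and abc: "a \<in> T" "b \<in> T" "c \<in> T"
        and e: "a \<otimes> b \<otimes> inv c = \<one>" unfolding triangular_relators_def by blast
      have ac: "a \<in> carrier G" "b \<in> carrier G" "c \<in> carrier G" using abc T_car by auto
      have "a \<otimes> b = \<one> \<otimes> c" using e inv_solve_right'[of "\<one>" "a \<otimes> b" c] ac by simp
      hence c: "c = a \<otimes> b" using ac by simp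
      show "r \<in> Rr" using r abc c by blast
    qed
  qed
  show "presents G T Rr"
    unfolding presents_def
  proof (intro conjI ballI allI impI)
    fix r assume "r \<in> Rr"
    then obtain s t where r: "r = [(s, True), (t, True), (s \<otimes> t, False)]" and st: "s \<in> T" "t \<in> T" "s \<otimes> t \<in> S"
      by blast
    have stT: "s \<otimes> t \<in> T" using prod_T st T_P by blast
    have sc: "s \<in> carrier G" "t \<in> carrier G" using st T_car by auto
    show "set r \<subseteq> T \<times> UNIV" using r st stT by auto
    show "ev r = \<one>" using r sc by (simp add: letter_val_def inv_mult_group m_assoc)
  next
    fix g assume "g \<in> carrier G"
    thus "\<exists>w. set w \<subseteq> T \<times> UNIV \<and> ev w = g" using generate by blast
  next
    fix w assume "set w \<subseteq> T \<times> UNIV \<and> ev w = \<one>"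
    hence "eqv w []" using kernel by blast
    thus "pres_equiv T Rr w []" by (simp add: pe_eq)
  qed
  show "\<nexists>a b c. a \<in> T \<and> b \<in> T \<and> c \<in> T \<and> a \<otimes> b \<otimes> c = \<one>"
  proof
    assume "\<exists>a b c. a \<in> T \<and> b \<in> T \<and> c \<in> T \<and> a \<otimes> b \<otimes> c = \<one>"
    then obtain a b c where abc: "a \<in> T" "b \<in> T" "c \<in> T" and e: "a \<otimes> b \<otimes> c = \<one>" by blast
    have "a \<otimes> b \<noteq> \<one>" using prod_ne1 abc T_P by blast
    moreover have "a \<otimes> b \<in> P" using mult_P abc T_P by blast
    ultimately have "a \<otimes> b \<otimes> c \<noteq> \<one>" using prod_ne1 abc T_P by blast
    thus False using e by blast
  qed
  show "\<forall>a\<in>T. \<forall>b\<in>T. \<forall>c\<in>T. a \<otimes> b \<otimes> c \<in> T \<longrightarrow> a \<otimes> b \<in> T \<and> b \<otimes> c \<in> T"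
  proof (intro ballI impI conjI)
    fix a b c assume abc: "a \<in> T" "b \<in> T" "c \<in> T" and e: "a \<otimes> b \<otimes> c \<in> T"
    have ac: "a \<in> carrier G" "b \<in> carrier G" "c \<in> carrier G" using abc T_car by auto
    have abP: "a \<otimes> b \<in> P" and bcP: "b \<otimes> c \<in> P" using mult_P abc T_P by auto
    have "a \<otimes> b \<in> S" using left_div[OF abP T_P[OF abc(3)]] e by blast
    moreover have "a \<otimes> b \<noteq> \<one>" using prod_ne1 abc T_P by blast
    ultimately show "a \<otimes> b \<in> T" by blast
    have "a \<otimes> (b \<otimes> c) \<in> S" using e ac by (simp add: m_assoc)
    hence "b \<otimes> c \<in> S" using right_div[OF T_P[OF abc(1)] bcP] by blast
    moreover have "b \<otimes> c \<noteq> \<one>" using prod_ne1 abc T_P by blast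
    ultimately show "b \<otimes> c \<in> T" by blast
  qed
qed

end

theorem mainTheorem8:
  fixes G :: "('a, 'b) monoid_scheme" and P :: "'a set" and \<Delta> :: 'a
  assumes "garside_finite_type G P \<Delta>"
  shows "restricted_triangular_presentation G (simples G P \<Delta> - {\<one>\<^bsub>G\<^esub>})
           {[(s, True), (t, True), (s \<otimes>\<^bsub>G\<^esub> t, False)] | s t.
              s \<in> simples G P \<Delta> - {\<one>\<^bsub>G\<^esub>} \<and> t \<in> simples G P \<Delta> - {\<one>\<^bsub>G\<^esub>} \<and>
              s \<otimes>\<^bsub>G\<^esub> t \<in> simples G P \<Delta>}"
proof -
  interpret gar G P \<Delta> using assms by (unfold_locales)
  show ?thesis using main_gar .
qed

end
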